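(* Let $n,m\ge 1$, $T\in\mathbb Z_{\ge1}$, $1\le L_D\le T$, $\alpha\in(0,1)$, $\mu\ge 1$, $\bar B\ge0$, $\bar\epsilon\ge0$, and suppose the dwell time satisfies $T>-\ln\mu/\ln\alpha$. Set $\hat\alpha:=\alpha\,\mu^{1/T}$, so that $\hat\alpha\in[\alpha,1)$. For $i\in\mathbb Z_{\ge0}$ let $k_i:=iT$, $\mathcal T_i:=\{k_i,\dots,k_i+T-1\}$ and $\mathcal T_i^D:=\{k_{i+1}-L_D,\dots,k_{i+1}-1\}\subseteq\mathcal T_i$. Let $P_{\min},P_{\max}$ be symmetric positive definite $n\times n$ matrices, $p_{\min}:=\lambda_{\min}(P_{\min})$, $p_{\max}:=\lambda_{\max}(P_{\max})$, and let $(P_i)_{i\ge0}$ be symmetric positive definite matrices with $P_{\min}\preceq P_i\preceq P_{\max}$ and $P_{i+1}\preceq\mu P_i$ for all $i$. Let $\eta(k)\in\mathbb R^n$, $k\in\mathbb Z_{\ge0}$, be a sequence satisfying $$\eta(k+1)=g(k)+B(k)\,\epsilon(k),\qquad k\ge0,$$ where $g(k)\in\mathbb R^n$, $B(k)\in\mathbb R^{n\times m}$ with $\|B(k)\|\le\bar B$, $\epsilon(k)\in\mathbb R^m$ with $\epsilon(k)=0$ for $k\in\mathcal T_i\setminus\mathcal T_i^D$ and $\|\epsilon(k)\|\le\bar\epsilon$ for $k\in\mathcal T_i^D$, and for every $i$ and every $k\in\mathcal T_i$ the one-step decay $$\big\|P_i^{1/2}g(k)\big\|\le\sqrt{\alpha}\,\big\|P_i^{1/2}\eta(k)\big\|$$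 holds. (In the paper's setting, $g(k)=(A(k)+B(k)K_i)\eta(k)+d(k)$ is the closed-loop deviation update under the feedback $\xi=K_i\eta$ and the decay is the robust Lyapunov decrease certified on segment $i$.) Then for all $k\in\mathbb Z_{\ge0}$, $$\|\eta(k)\|\le\sqrt{\tfrac{p_{\max}}{p_{\min}}}\;\hat\alpha^{k/2}\,\|\eta(0)\|+\sqrt{\tfrac{p_{\max}}{p_{\min}}}\;\frac{(\hat\alpha/\alpha)^{T/2}}{1-\sqrt{\hat\alpha}}\;\bar B\,\bar\epsilon .$$
   Context: $\|\cdot\|$ is the Euclidean norm on vectors and the induced spectral norm on matrices; $P^{1/2}$ is the symmetric positive definite square root; $\preceq$ is the Loewner order; $\lambda_{\min},\lambda_{\max}$ denote extremal eigenvalues. *)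

theory Defs
  imports "HOL-Analysis.Analysis"
begin

definition sym_mat :: "real^'n^'n \<Rightarrow> bool" where
  "sym_mat P \<longleftrightarrow> transpose P = P"

definition pos_def :: "real^'n^'n \<Rightarrow> bool" where
  "pos_def P \<longleftrightarrow> sym_mat P \<and> (\<forall>x. x \<noteq> 0 \<longrightarrow> x \<bullet> (P *v x) > 0)"

definition loewner_le :: "real^'n^'n \<Rightarrow> real^'n^'n \<Rightarrow> bool" where
  "loewner_le A B \<longleftrightarrow> (\<forall>x. x \<bullet> ((B - A) *v x) \<ge> 0)"

definition mat_sqrt :: "real^'n^'n \<Rightarrow> real^'n^'n" where
  "mat_sqrt P = (THE S. pos_def S \<and> S ** S = P)"

definition eigenvalues :: "real^'n^'n \<Rightarrow> real set" where
  "eigenvalues A = {c. \<exists>v. v \<noteq> 0 \<and> A *v v = c *\<^sub>R v}"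

definition lambda_min :: "real^'n^'n \<Rightarrow> real" where
  "lambda_min A = Inf (eigenvalues A)"

definition lambda_max :: "real^'n^'n \<Rightarrow> real" where
  "lambda_max A = Sup (eigenvalues A)"

definition spec_norm :: "real^'m^'n \<Rightarrow> real" where
  "spec_norm B = onorm (\<lambda>x. B *v x)"

end

theory Submission
  imports Defs
begin
lemma sym_inner:
  fixes P :: "real^'n^'n"
  assumes "transpose P = P" shows "x \<bullet> (P *v y) = (P *v x) \<bullet> y"
  by (metis dot_lmul_matrix vector_transpose_matrix assms)

lemma max_eigvec:
  fixes P :: "real^'n^'n"
  assumes sym: "transpose P = P" and U: "subspace U" and ne: "U \<noteq> {0}"
    and inv: "\<And>x. x \<in> U \<Longrightarrow> P *v x \<in> U"
  shows "\<exists>v\<in>U. norm v = 1 \<and> P *v v = (v \<bullet> (P *v v)) *\<^sub>R v"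
proof -
  define K where "K = sphere (0::real^'n) 1 \<inter> U"
  have cK: "compact K" unfolding K_def
    by (intro compact_Int_closed compact_sphere closed_subspace U)
  obtain u where u: "u \<in> U" "u \<noteq> 0" using ne U subspace_0 by blast
  have "u /\<^sub>R norm u \<in> K" using u U unfolding K_def by (auto simp: subspace_scale)
  then have neK: "K \<noteq> {}" by blast
  have "continuous_on K (\<lambda>x. x \<bullet> (P *v x))"
    by (intro continuous_intros)
  then obtain v where vK: "v \<in> K" and vmax: "\<And>y. y \<in> K \<Longrightarrow> y \<bullet> (P *v y) \<le> v \<bullet> (P *v v)"
    using continuous_attains_sup[OF cK neK] by blast
  define M where "M = v \<bullet> (P *v v)"
  have vU: "v \<in> U" and vn: "norm v = 1" using vK by (auto simp: K_def)
  have bnd: "x \<bullet> (P *v x) \<le> M * (x \<bullet> x)" if "x \<in> U" for x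
  proof (cases "x = 0")
    case True then show ?thesis by simp
  next
    case False
    then have "x /\<^sub>R norm x \<in> K" using that U unfolding K_def by (auto simp: subspace_scale)
    then have "(x /\<^sub>R norm x) \<bullet> (P *v (x /\<^sub>R norm x)) \<le> M" using vmax M_def by blast
    then have "(x \<bullet> (P *v x)) / (norm x)^2 \<le> M"
      by (simp add: matrix_vector_mult_scaleR power2_eq_square divide_inverse mult.commute mult.left_commute)
    moreover have "(norm x)^2 > 0" using False by simp
    ultimately show ?thesis by (simp add: divide_le_eq power2_norm_eq_inner)
  qed
  define w where "w = M *\<^sub>R v - P *v v"
  have wU: "w \<in> U" unfolding w_def using vU inv U by (simp add: subspace_diff subspace_scale)
  define W where "W = w \<bullet> w"
  define q where "q = w \<bullet> (M *\<^sub>R w - P *v w)"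
  have q0: "q \<ge> 0" using bnd[OF wU] unfolding q_def by (simp add: inner_diff_right)
  have vv: "v \<bullet> v = 1" using vn by (simp add: norm_eq_1)
  have key: "0 \<le> 2*t*W + t^2*q" for t
  proof -
    have zU: "v + t *\<^sub>R w \<in> U" using vU wU U by (simp add: subspace_add subspace_scale)
    have "0 \<le> M * ((v + t *\<^sub>R w) \<bullet> (v + t *\<^sub>R w)) - (v + t *\<^sub>R w) \<bullet> (P *v (v + t *\<^sub>R w))"
      using bnd[OF zU] by simp
    also have "\<dots> = 2*t*W + t^2*q"
    proof -
      have hW: "M * (w \<bullet> v) - w \<bullet> (P *v v) = W"
        unfolding W_def by (simp add: w_def inner_diff_right)
      have h2: "v \<bullet> (P *v w) = w \<bullet> (P *v v)" using sym_inner[OF sym, of v w] by (simp add: inner_commute)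
      have h1: "v \<bullet> (P *v v) = M" by (simp add: M_def)
      have hW2: "t*2*(M*(w \<bullet> v)) = t*2*(W + w \<bullet> (P *v v))" using hW by simp
      show ?thesis
        using hW2 h2 h1 vv unfolding q_def
        by (simp add: algebra_simps inner_add_left inner_add_right inner_diff_right matrix_vector_right_distrib
           matrix_vector_mult_scaleR inner_commute[of v w] power2_eq_square)
    qed
    finally show ?thesis .
  qed
  have W0: "W = 0"
  proof -
    have qp: "q + 1 > 0" using q0 by simp
    define s where "s = W/(q+1)"
    have Ws: "W = s*(q+1)" using qp by (simp add: s_def)
    have h: "0 \<le> 2*(-s)*W + (-s)^2*q" using key by blast
    have "2*(-s)*W + (-s)^2*q = s^2*(-q-2)" unfolding Ws by (simp add: power2_eq_square algebra_simps)
    with h have "s^2*(-q-2) \<ge> 0" by simp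
    then have "s^2 * (q+2) \<le> 0" by (simp add: algebra_simps)
    then have "s^2 \<le> 0" using q0 by (simp add: mult_le_0_iff)
    then have "s = 0" by simp
    then show ?thesis using Ws by simp
  qed
  then have "w = 0" by (simp add: W_def)
  then show ?thesis using vU vn unfolding w_def M_def by auto
qed

definition eigbasis_on :: "real^'n^'n \<Rightarrow> (real^'n) set \<Rightarrow> (real^'n) set \<Rightarrow> bool" where
  "eigbasis_on P U B \<longleftrightarrow> B \<subseteq> U \<and> finite B \<and> pairwise orthogonal B \<and>
     (\<forall>b\<in>B. norm b = 1 \<and> P *v b = (b \<bullet> (P *v b)) *\<^sub>R b) \<and> span B = U"

lemma eig_basis_sub:
  fixes P :: "real^'n^'n"
  assumes sym: "transpose P = P"
  shows "subspace U \<Longrightarrow> dim U = n \<Longrightarrow> (\<forall>x\<in>U. P *v x \<in> U) \<Longrightarrow> \<exists>B. eigbasis_on P U B"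
proof (induction n arbitrary: U)
  case 0
  then have "U = {0}" using subspace_0 by auto
  then show ?case unfolding eigbasis_on_def by (intro exI[of _ "{}"]) auto
next
  case (Suc n)
  have ne: "U \<noteq> {0}" using Suc.prems(2) by auto
  obtain v where vU: "v \<in> U" and vn: "norm v = 1" and ev: "P *v v = (v \<bullet> (P *v v)) *\<^sub>R v"
    using max_eigvec[OF sym Suc.prems(1) ne] Suc.prems(3) by blast
  define c where "c = v \<bullet> (P *v v)"
  have vv: "v \<bullet> v = 1" using vn by (simp add: norm_eq_1)
  define U' where "U' = {x\<in>U. v \<bullet> x = 0}"
  have sU': "subspace U'" using Suc.prems(1) unfolding U'_def subspace_def
    by (auto simp: inner_add_right)
  have invU': "\<forall>x\<in>U'. P *v x \<in> U'"
  proof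
    fix x assume x: "x \<in> U'"
    have "v \<bullet> (P *v x) = (P *v v) \<bullet> x" by (rule sym_inner[OF sym])
    also have "\<dots> = c * (v \<bullet> x)" using ev c_def by (metis inner_scaleR_left)
    also have "\<dots> = 0" using x by (simp add: U'_def)
    finally show "P *v x \<in> U'" using x Suc.prems(3) by (simp add: U'_def)
  qed
  have vnot: "v \<notin> U'" using vv by (simp add: U'_def)
  have U'U: "U' \<subseteq> U" by (auto simp: U'_def)
  have spanins: "span (insert v U') = U"
  proof
    show "span (insert v U') \<subseteq> U" using vU U'U Suc.prems(1)
      by (simp add: span_minimal)
  next
    show "U \<subseteq> span (insert v U')"
    proof
      fix x assume x: "x \<in> U"
      have "x - (v \<bullet> x) *\<^sub>R v \<in> U'" unfolding U'_def using x vU Suc.prems(1) vv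
        by (simp add: subspace_diff subspace_scale inner_diff_right)
      then have "x - (v \<bullet> x) *\<^sub>R v \<in> span U'" by (rule span_base)
      then show "x \<in> span (insert v U')" unfolding span_insert by blast
    qed
  qed
  have "dim U = dim U' + 1"
    using dim_insert[of v U'] vnot sU' spanins by (metis dim_span span_eq_iff)
  then have "dim U' = n" using Suc.prems(2) by simp
  then obtain B' where B': "eigbasis_on P U' B'" using Suc.IH[OF sU'] invU' by blast
  have "eigbasis_on P U (insert v B')"
    unfolding eigbasis_on_def
  proof (intro conjI)
    show "insert v B' \<subseteq> U" using B' vU U'U by (auto simp: eigbasis_on_def)
    show "finite (insert v B')" using B' by (auto simp: eigbasis_on_def)
    show "pairwise orthogonal (insert v B')"
      using B' unfolding eigbasis_on_def pairwise_insert
      by (auto simp: U'_def orthogonal_def inner_commute)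
    show "\<forall>b\<in>insert v B'. norm b = 1 \<and> P *v b = (b \<bullet> (P *v b)) *\<^sub>R b"
      using B' vn ev by (auto simp: eigbasis_on_def)
    have "span (insert v B') = span (insert v U')"
      using B' unfolding eigbasis_on_def span_insert by (auto simp: span_span)
    then show "span (insert v B') = U" using spanins by simp
  qed
  then show ?case by blast
qed

lemma eig_basis:
  fixes P :: "real^'n^'n"
  assumes sym: "transpose P = P"
  shows "\<exists>B. eigbasis_on P UNIV B"
  using eig_basis_sub[OF sym, of UNIV "dim (UNIV :: (real^'n) set)"] by simp

lemma eb_inner:
  assumes "eigbasis_on P U B" "b \<in> B" "b' \<in> B"
  shows "b \<bullet> b' = (if b = b' then 1 else 0)"
  using assms unfolding eigbasis_on_def pairwise_def orthogonal_def
  by (auto simp: norm_eq_1)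

lemma eb_expand:
  fixes P :: "real^'n^'n"
  assumes eb: "eigbasis_on P UNIV B"
  shows "x = (\<Sum>b\<in>B. (b \<bullet> x) *\<^sub>R b)"
proof -
  have fin: "finite B" using eb by (simp add: eigbasis_on_def)
  define y where "y = x - (\<Sum>b\<in>B. (b \<bullet> x) *\<^sub>R b)"
  have orth: "orthogonal y b'" if b': "b' \<in> B" for b'
  proof -
    have "(\<Sum>b\<in>B. (b \<bullet> x) *\<^sub>R b) \<bullet> b' = (\<Sum>b\<in>B. (b \<bullet> x) * (b \<bullet> b'))"
      by (simp add: inner_sum_left)
    also have "\<dots> = (\<Sum>b\<in>B. if b = b' then b' \<bullet> x else 0)"
      by (rule sum.cong) (auto simp: eb_inner[OF eb _ b'])
    also have "\<dots> = b' \<bullet> x" using fin b' by simp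
    finally show ?thesis unfolding y_def orthogonal_def by (simp add: inner_diff_left inner_diff_right inner_commute)
  qed
  have "y \<in> span B" using eb by (simp add: eigbasis_on_def)
  then have "orthogonal y y" by (rule orthogonal_to_span) (rule orth)
  then have "y = 0" by (simp add: orthogonal_def)
  then show ?thesis by (simp add: y_def)
qed

lemma eb_eig:
  assumes "eigbasis_on P U B" "b \<in> B"
  shows "P *v b = (b \<bullet> (P *v b)) *\<^sub>R b" "norm b = 1"
  using assms unfolding eigbasis_on_def by blast+

lemma scale_aux: "p = c *\<^sub>R (b::'a::real_vector) \<Longrightarrow> t *\<^sub>R p = (c * t) *\<^sub>R b"
  by simp

lemma eb_P:
  fixes P :: "real^'n^'n"
  assumes eb: "eigbasis_on P UNIV B"
  shows "P *v x = (\<Sum>b\<in>B. ((b \<bullet> (P *v b)) * (b \<bullet> x)) *\<^sub>R b)"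
proof -
  have "P *v x = P *v (\<Sum>b\<in>B. (b \<bullet> x) *\<^sub>R b)" by (rule arg_cong[OF eb_expand[OF eb]])
  also have "\<dots> = (\<Sum>b\<in>B. (b \<bullet> x) *\<^sub>R (P *v b))"
    by (simp add: linear_sum[OF matrix_vector_mul_linear] matrix_vector_mult_scaleR)
  also have "\<dots> = (\<Sum>b\<in>B. ((b \<bullet> (P *v b)) * (b \<bullet> x)) *\<^sub>R b)"
    by (rule sum.cong[OF refl], rule scale_aux[OF eb_eig(1)[OF eb]])
  finally show ?thesis .
qed

lemma eb_quad:
  fixes P :: "real^'n^'n"
  assumes eb: "eigbasis_on P UNIV B"
  shows "x \<bullet> (P *v x) = (\<Sum>b\<in>B. (b \<bullet> (P *v b)) * (b \<bullet> x)^2)"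
proof -
  have "x \<bullet> (P *v x) = x \<bullet> (\<Sum>b\<in>B. ((b \<bullet> (P *v b)) * (b \<bullet> x)) *\<^sub>R b)"
    by (rule arg_cong[OF eb_P[OF eb]])
  also have "\<dots> = (\<Sum>b\<in>B. (b \<bullet> (P *v b)) * (b \<bullet> x)^2)"
    by (simp add: inner_sum_right power2_eq_square inner_commute mult.assoc)
  finally show ?thesis .
qed

lemma eb_norm:
  fixes P :: "real^'n^'n"
  assumes eb: "eigbasis_on P UNIV B"
  shows "x \<bullet> x = (\<Sum>b\<in>B. (b \<bullet> x)^2)"
proof -
  have "x \<bullet> x = (\<Sum>b\<in>B. (b \<bullet> x) *\<^sub>R b) \<bullet> x"
    by (rule arg_cong[where f="\<lambda>z. z \<bullet> x", OF eb_expand[OF eb]])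
  also have "\<dots> = (\<Sum>b\<in>B. (b \<bullet> x)^2)"
    by (simp add: inner_sum_left power2_eq_square)
  finally show ?thesis .
qed

lemma eb_lo:
  fixes P :: "real^'n^'n"
  assumes eb: "eigbasis_on P UNIV B" and lo: "\<And>b. b \<in> B \<Longrightarrow> lo \<le> b \<bullet> (P *v b)"
  shows "lo * (x \<bullet> x) \<le> x \<bullet> (P *v x)"
proof -
  have n: "lo * (x \<bullet> x) = (\<Sum>b\<in>B. lo * (b \<bullet> x)^2)"
    by (simp_all only: eb_norm[OF eb, of x] sum_distrib_left)
  have "(\<Sum>b\<in>B. lo * (b \<bullet> x)^2) \<le> (\<Sum>b\<in>B. (b \<bullet> (P *v b)) * (b \<bullet> x)^2)"
    by (rule sum_mono) (simp add: lo mult_right_mono)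
  then show "lo * (x \<bullet> x) \<le> x \<bullet> (P *v x)" unfolding n by (subst eb_quad[OF eb])
qed

lemma eb_hi:
  fixes P :: "real^'n^'n"
  assumes eb: "eigbasis_on P UNIV B" and hi: "\<And>b. b \<in> B \<Longrightarrow> b \<bullet> (P *v b) \<le> hi"
  shows "x \<bullet> (P *v x) \<le> hi * (x \<bullet> x)"
proof -
  have n: "hi * (x \<bullet> x) = (\<Sum>b\<in>B. hi * (b \<bullet> x)^2)"
    by (simp_all only: eb_norm[OF eb, of x] sum_distrib_left)
  have "(\<Sum>b\<in>B. (b \<bullet> (P *v b)) * (b \<bullet> x)^2) \<le> (\<Sum>b\<in>B. hi * (b \<bullet> x)^2)"
    by (rule sum_mono) (simp add: hi mult_right_mono)
  then show "x \<bullet> (P *v x) \<le> hi * (x \<bullet> x)" unfolding n by (subst eb_quad[OF eb])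
qed

lemma pd_lam:
  fixes P :: "real^'n^'n"
  assumes "pos_def P" "eigbasis_on P UNIV B" "b \<in> B"
  shows "b \<bullet> (P *v b) > 0"
proof -
  have "norm b = 1" using eb_eig(2)[OF assms(2,3)] .
  then have "b \<noteq> 0" by auto
  then show ?thesis using assms(1) unfolding pos_def_def by blast
qed

lemma lin_sum_aux:
  "linear (\<lambda>x::real^'n. \<Sum>b\<in>B. (c b * (b \<bullet> x)) *\<^sub>R b)"
  by (rule linearI) (simp_all add: inner_add_right inner_scaleR_right distrib_left scaleR_add_left
      sum.distrib scaleR_sum_right mult.left_commute)

lemma sqrt_unique_eig:
  fixes P S :: "real^'n^'n"
  assumes eb: "eigbasis_on P UNIV B" and b: "b \<in> B" and S: "pos_def S" "S ** S = P"
    and lpos: "b \<bullet> (P *v b) \<ge> 0"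
  shows "S *v b = sqrt (b \<bullet> (P *v b)) *\<^sub>R b"
proof -
  define r where "r = sqrt (b \<bullet> (P *v b))"
  have r0: "r \<ge> 0" using lpos by (simp add: r_def)
  have rr: "r * r = b \<bullet> (P *v b)" unfolding r_def by (rule real_sqrt_mult_self[THEN trans], simp add: lpos)
  define w where "w = S *v b - r *\<^sub>R b"
  have SS: "S *v (S *v b) = P *v b" using S(2) by (simp add: matrix_vector_mul_assoc)
  have "S *v w + r *\<^sub>R w = S *v (S *v b) - (r * r) *\<^sub>R b"
    unfolding w_def by (simp add: matrix_vector_mult_diff_distrib matrix_vector_mult_scaleR algebra_simps)
  also have "\<dots> = 0" unfolding SS rr by (rule diff_eq_eq[THEN iffD2]) (simp add: eb_eig(1)[OF eb b, symmetric])
  finally have Sw: "S *v w = - r *\<^sub>R w" by (simp add: eq_neg_iff_add_eq_0)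
  have "w = 0"
  proof (rule ccontr)
    assume "w \<noteq> 0"
    then have "w \<bullet> (S *v w) > 0" using S(1) unfolding pos_def_def by blast
    moreover have "w \<bullet> (S *v w) = - r * (w \<bullet> w)" by (simp add: Sw)
    moreover have "r * (w \<bullet> w) \<ge> 0" using r0 by simp
    ultimately show False by linarith
  qed
  then show ?thesis by (simp add: w_def r_def)
qed

lemma vec_eq_by_inner:
  fixes z z' :: "real^'n"
  assumes "\<And>y. z \<bullet> y = z' \<bullet> y" shows "z = z'"
proof -
  have "(z - z') \<bullet> (z - z') = 0" using assms[of "z - z'"] by (simp add: inner_diff_left)
  then show ?thesis by simp
qed

lemma mat_sqrt_props:
  fixes P :: "real^'n^'n"
  assumes pd: "pos_def P"
  shows "pos_def (mat_sqrt P) \<and> mat_sqrt P ** mat_sqrt P = P"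
proof -
  have sym: "transpose P = P" using pd by (simp add: pos_def_def sym_mat_def)
  obtain B where eb: "eigbasis_on P UNIV B" using eig_basis[OF sym] by blast
  have fin: "finite B" using eb by (simp add: eigbasis_on_def)
  define l where "l b = b \<bullet> (P *v b)" for b
  have lpos: "l b > 0" if "b \<in> B" for b using pd_lam[OF pd eb that] by (simp add: l_def)
  define f where "f x = (\<Sum>b\<in>B. (sqrt (l b) * (b \<bullet> x)) *\<^sub>R b)" for x
  have lin: "linear f" unfolding f_def by (rule lin_sum_aux)
  define S where "S = matrix f"
  have Sx: "S *v x = f x" for x
    unfolding S_def by (rule matrix_works[OF linear_matrix_vector_mul_eq[THEN iffD2, OF lin]])
  have bf: "b' \<bullet> f x = sqrt (l b') * (b' \<bullet> x)" if b': "b' \<in> B" for b' x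
  proof -
    have "b' \<bullet> f x = (\<Sum>b\<in>B. sqrt (l b) * (b \<bullet> x) * (b' \<bullet> b))"
      unfolding f_def by (simp add: inner_sum_right)
    also have "\<dots> = (\<Sum>b\<in>B. if b = b' then sqrt (l b') * (b' \<bullet> x) else 0)"
      by (rule sum.cong[OF refl]) (simp add: eb_inner[OF eb b'])
    also have "\<dots> = sqrt (l b') * (b' \<bullet> x)" using fin b' by simp
    finally show ?thesis .
  qed
  have SS: "S ** S = P"
  proof (subst matrix_eq, intro allI)
    fix x
    have "(S ** S) *v x = f (f x)" by (simp add: Sx matrix_vector_mul_assoc[symmetric])
    also have "\<dots> = (\<Sum>b\<in>B. (l b * (b \<bullet> x)) *\<^sub>R b)"
      unfolding f_def[of "f x"]
      by (rule sum.cong[OF refl]) (simp add: bf lpos less_imp_le mult.assoc[symmetric])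
    also have "\<dots> = P *v x" by (rule eb_P[OF eb, symmetric, unfolded l_def[symmetric]])
    finally show "(S ** S) *v x = P *v x" .
  qed
  have symS: "transpose S = S"
  proof (subst matrix_eq, intro allI vec_eq_by_inner)
    fix x y
    have "(transpose S *v x) \<bullet> y = x \<bullet> f y" by (simp add: dot_lmul_matrix Sx)
    also have "\<dots> = (\<Sum>b\<in>B. sqrt (l b) * (b \<bullet> y) * (x \<bullet> b))"
      unfolding f_def by (simp add: inner_sum_right)
    also have "\<dots> = f x \<bullet> y"
      unfolding f_def by (simp add: inner_sum_left mult_ac inner_commute[of x])
    finally show "(transpose S *v x) \<bullet> y = (S *v x) \<bullet> y" by (simp add: Sx)
  qed
  have posS: "x \<bullet> (S *v x) > 0" if "x \<noteq> 0" for x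
  proof -
    have "0 < x \<bullet> x" using that by simp
    then have "(\<Sum>b\<in>B. (b \<bullet> x)^2) \<noteq> 0" using eb_norm[OF eb, of x] by simp
    have "\<exists>b\<in>B. b \<bullet> x \<noteq> 0"
    proof (rule ccontr)
      assume "\<not> (\<exists>b\<in>B. b \<bullet> x \<noteq> 0)"
      then have "(\<Sum>b\<in>B. (b \<bullet> x)^2) = 0" by simp
      with \<open>(\<Sum>b\<in>B. (b \<bullet> x)^2) \<noteq> 0\<close> show False by blast
    qed
    then obtain b0 where b0: "b0 \<in> B" "b0 \<bullet> x \<noteq> 0" by blast
    have "x \<bullet> f x = (\<Sum>b\<in>B. sqrt (l b) * (b \<bullet> x)^2)"
      unfolding f_def by (simp add: inner_sum_right power2_eq_square inner_commute mult_ac)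
    also have "\<dots> > 0"
      by (rule sum_pos2[OF fin b0(1)]) (auto simp: b0 lpos less_imp_le)
    finally show ?thesis by (simp add: Sx)
  qed
  have pdS: "pos_def S" unfolding pos_def_def sym_mat_def using symS posS by blast
  have uniq: "S' = S" if S': "pos_def S' \<and> S' ** S' = P" for S'
  proof (subst matrix_eq, intro allI)
    fix x
    have "S' *v x = S' *v (\<Sum>b\<in>B. (b \<bullet> x) *\<^sub>R b)" by (rule arg_cong[OF eb_expand[OF eb]])
    also have "\<dots> = (\<Sum>b\<in>B. (b \<bullet> x) *\<^sub>R (S' *v b))"
      by (simp add: linear_sum[OF matrix_vector_mul_linear] matrix_vector_mult_scaleR)
    also have "\<dots> = (\<Sum>b\<in>B. (b \<bullet> x) *\<^sub>R (sqrt (l b) *\<^sub>R b))"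
    proof (rule sum.cong[OF refl])
      fix b assume b: "b \<in> B"
      have "S' *v b = sqrt (b \<bullet> (P *v b)) *\<^sub>R b"
        using sqrt_unique_eig[OF eb b] S' lpos[OF b] by (simp add: l_def)
      then show "(b \<bullet> x) *\<^sub>R (S' *v b) = (b \<bullet> x) *\<^sub>R (sqrt (l b) *\<^sub>R b)" by (simp add: l_def)
    qed
    also have "\<dots> = S *v x" unfolding Sx f_def by (simp add: mult.commute)
    finally show "S' *v x = S *v x" .
  qed
  have "mat_sqrt P = S" unfolding mat_sqrt_def
    by (rule the_equality) (rule conjI[OF pdS SS], erule uniq)
  then show ?thesis using pdS SS by simp
qed

lemma sqrt_norm:
  fixes P :: "real^'n^'n"
  assumes pd: "pos_def P"
  shows "(norm (mat_sqrt P *v y))^2 = y \<bullet> (P *v y)"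
proof -
  let ?S = "mat_sqrt P"
  have props: "pos_def ?S" "?S ** ?S = P" using mat_sqrt_props[OF pd] by auto
  have sym: "transpose ?S = ?S" using props(1) by (simp add: pos_def_def sym_mat_def)
  have "(norm (?S *v y))^2 = (?S *v y) \<bullet> (?S *v y)" by (simp add: power2_norm_eq_inner)
  also have "\<dots> = y \<bullet> (?S *v (?S *v y))" by (rule sym_inner[OF sym, symmetric])
  also have "\<dots> = y \<bullet> (P *v y)" by (simp add: matrix_vector_mul_assoc props(2))
  finally show ?thesis .
qed

lemma eig_bounds:
  fixes P :: "real^'n^'n"
  assumes pd: "pos_def P"
  shows "lambda_min P > 0" "\<And>x. lambda_min P * (x \<bullet> x) \<le> x \<bullet> (P *v x)"
    "\<And>x. x \<bullet> (P *v x) \<le> lambda_max P * (x \<bullet> x)"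
proof -
  have sym: "transpose P = P" using pd by (simp add: pos_def_def sym_mat_def)
  obtain B where eb: "eigbasis_on P UNIV B" using eig_basis[OF sym] by blast
  have fin: "finite B" using eb by (simp add: eigbasis_on_def)
  define l where "l b = b \<bullet> (P *v b)" for b
  have lpos: "l b > 0" if "b \<in> B" for b using pd_lam[OF pd eb that] by (simp add: l_def)
  define E where "E = eigenvalues P"
  have lE: "l b \<in> E" if "b \<in> B" for b
  proof -
    have "b \<noteq> 0" using eb_eig(2)[OF eb that] by auto
    then show ?thesis unfolding E_def eigenvalues_def l_def using eb_eig(1)[OF eb that] by blast
  qed
  have Bne: "B \<noteq> {}"
  proof
    assume "B = {}"
    then have "x \<bullet> x = 0" for x :: "real^'n" using eb_norm[OF eb, of x] by simp
    then have "(axis undefined (1::real) :: real^'n) = 0" by simp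
    then have "(axis undefined (1::real) :: real^'n) $ undefined = 0" by simp
    moreover have "(axis undefined (1::real) :: real^'n) $ undefined = 1" by (simp add: axis_def)
    ultimately show False by simp
  qed
  define lo where "lo = Min (l ` B)"
  define hi where "hi = Max (l ` B)"
  have lo_le: "lo \<le> l b" and hi_ge: "l b \<le> hi" if "b \<in> B" for b
    using fin that by (auto simp: lo_def hi_def)
  have lo_pos: "lo > 0" using Min_in[of "l ` B"] fin Bne lpos by (auto simp: lo_def)
  have Ebnd: "lo \<le> c \<and> c \<le> hi" if "c \<in> E" for c
  proof -
    have "\<exists>v. v \<noteq> 0 \<and> P *v v = c *\<^sub>R v" using that by (simp add: E_def eigenvalues_def)
    then obtain v where v: "v \<noteq> 0" "P *v v = c *\<^sub>R v" by (elim exE conjE)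
    have vv: "v \<bullet> v > 0" using v(1) by simp
    have q: "v \<bullet> (P *v v) = c * (v \<bullet> v)" using v(2) by simp
    have "lo * (v \<bullet> v) \<le> c * (v \<bullet> v)" using eb_lo[OF eb, where lo=lo and x=v] lo_le q by (simp add: l_def)
    moreover have "c * (v \<bullet> v) \<le> hi * (v \<bullet> v)" using eb_hi[OF eb, where hi=hi and x=v] hi_ge q by (simp add: l_def)
    ultimately show ?thesis using vv by simp
  qed
  have Ene: "E \<noteq> {}" using lE Bne by blast
  have bb: "bdd_below E" by (rule bdd_belowI[of _ lo]) (simp add: Ebnd)
  have ba: "bdd_above E" by (rule bdd_aboveI[of _ hi]) (simp add: Ebnd)
  have "lo \<le> Inf E" using Ene Ebnd by (auto intro: cInf_greatest)
  then show "lambda_min P > 0" using lo_pos by (simp add: lambda_min_def E_def)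
  show "lambda_min P * (x \<bullet> x) \<le> x \<bullet> (P *v x)" for x
    using eb_lo[OF eb, where lo="Inf E" and x=x] cInf_lower[OF lE bb] by (simp add: lambda_min_def E_def l_def)
  show "x \<bullet> (P *v x) \<le> lambda_max P * (x \<bullet> x)" for x
    using eb_hi[OF eb, where hi="Sup E" and x=x] cSup_upper[OF lE ba] by (simp add: lambda_max_def E_def l_def)
qed

lemma alphahat_facts:
  fixes T :: nat and \<alpha> \<mu> \<alpha>hat :: real
  assumes T_pos: "T \<ge> 1" and alpha: "0 < \<alpha>" "\<alpha> < 1" and mu: "\<mu> \<ge> 1"
    and dwell: "real T > - ln \<mu> / ln \<alpha>"
    and alphahat: "\<alpha>hat = \<alpha> * \<mu> powr (1 / real T)"
  shows "0 < \<alpha>hat" "\<alpha>hat < 1" "(\<alpha>hat / \<alpha>) ^ T = \<mu>" "\<alpha>hat / \<alpha> \<ge> 1"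
proof -
  have Tp: "real T > 0" using T_pos by simp
  have q: "\<alpha>hat / \<alpha> = \<mu> powr (1 / real T)" using alphahat alpha by simp
  show "0 < \<alpha>hat" using alphahat alpha mu by simp
  have la: "ln \<alpha> < 0" using alpha by simp
  have "real T * ln \<alpha> < (- ln \<mu> / ln \<alpha>) * ln \<alpha>"
    by (rule mult_strict_right_mono_neg[OF dwell la])
  then have "real T * ln \<alpha> < - ln \<mu>" using la by simp
  then have "ln \<alpha> + ln \<mu> / real T < 0" using Tp by (simp add: field_simps)
  moreover have "\<alpha>hat = exp (ln \<alpha> + ln \<mu> / real T)"
    using alphahat alpha mu by (simp add: powr_def exp_add)
  ultimately show "\<alpha>hat < 1" by simp
  have "(\<mu> powr (1 / real T)) ^ T = \<mu> powr (1 / real T * real T)"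
    using mu by (simp add: powr_realpow[symmetric] powr_powr)
  also have "\<dots> = \<mu>" using Tp mu by simp
  finally show "(\<alpha>hat / \<alpha>) ^ T = \<mu>" using q by simp
  show "\<alpha>hat / \<alpha> \<ge> 1" using q mu by (simp add: ge_one_powr_ge_zero)
qed

lemma loewner_quad:
  fixes A B :: "real^'n^'n"
  assumes "loewner_le A B" shows "x \<bullet> (A *v x) \<le> x \<bullet> (B *v x)"
  using assms unfolding loewner_le_def
  by (metis diff_ge_0_iff_ge inner_diff_right matrix_vector_mult_diff_rdistrib)

lemma sqrt_bound_le:
  fixes w c y :: real
  assumes "w \<ge> 0" "w^2 \<le> c * y^2" "y \<ge> 0"
  shows "w \<le> sqrt c * y"
proof -
  have "w \<le> sqrt (c * y^2)" using assms(2) by (rule real_le_rsqrt)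
  also have "\<dots> = sqrt c * y" using assms(3) by (simp add: real_sqrt_mult)
  finally show ?thesis .
qed

lemma sqrt_bound_ge:
  fixes w c y :: real
  assumes "w \<ge> 0" "c * y^2 \<le> w^2" "y \<ge> 0" "c \<ge> 0"
  shows "sqrt c * y \<le> w"
proof -
  have "sqrt (c * y^2) \<le> sqrt (w^2)" using assms(2) by (rule real_sqrt_le_mono)
  then show ?thesis using assms by (simp add: real_sqrt_mult)
qed

theorem theorem2:
  fixes T L_D :: nat
    and \<alpha> \<mu> Bbar epsbar \<alpha>hat :: real
    and Pmin Pmax :: "real^'n^'n"
    and P :: "nat \<Rightarrow> real^'n^'n"
    and eta g :: "nat \<Rightarrow> real^'n"
    and B :: "nat \<Rightarrow> real^'m^'n"
    and eps :: "nat \<Rightarrow> real^'m"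
  assumes T_pos: "T \<ge> 1"
    and LD: "1 \<le> L_D" "L_D \<le> T"
    and alpha: "0 < \<alpha>" "\<alpha> < 1"
    and mu: "\<mu> \<ge> 1"
    and Bbar: "Bbar \<ge> 0"
    and epsbar: "epsbar \<ge> 0"
    and dwell: "real T > - ln \<mu> / ln \<alpha>"
    and alphahat: "\<alpha>hat = \<alpha> * \<mu> powr (1 / real T)"
    and Pmin: "pos_def Pmin" and Pmax: "pos_def Pmax"
    and Ppd: "\<And>i. pos_def (P i)"
    and Pbounds: "\<And>i. loewner_le Pmin (P i) \<and> loewner_le (P i) Pmax"
    and Pinc: "\<And>i. loewner_le (P (Suc i)) (\<mu> *\<^sub>R P i)"
    and dyn: "\<And>k. eta (Suc k) = g k + B k *v eps k"
    and Bnorm: "\<And>k. spec_norm (B k) \<le> Bbar"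
    and eps_zero: "\<And>i k. k \<in> {i*T ..< i*T + T} - {(Suc i)*T - L_D ..< (Suc i)*T} \<Longrightarrow> eps k = 0"
    and eps_bound: "\<And>i k. k \<in> {(Suc i)*T - L_D ..< (Suc i)*T} \<Longrightarrow> norm (eps k) \<le> epsbar"
    and decay: "\<And>i k. k \<in> {i*T ..< i*T + T} \<Longrightarrow>
        norm (mat_sqrt (P i) *v g k) \<le> sqrt \<alpha> * norm (mat_sqrt (P i) *v eta k)"
  shows "\<forall>k. norm (eta k) \<le>
      sqrt (lambda_max Pmax / lambda_min Pmin) * \<alpha>hat powr (real k / 2) * norm (eta 0)
      + sqrt (lambda_max Pmax / lambda_min Pmin) * ((\<alpha>hat / \<alpha>) powr (real T / 2) / (1 - sqrt \<alpha>hat))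
        * Bbar * epsbar"
proof
  fix k0 :: nat
  define pmin where "pmin = lambda_min Pmin"
  define pmax where "pmax = lambda_max Pmax"
  have pmin_pos: "pmin > 0" using eig_bounds(1)[OF Pmin] by (simp add: pmin_def)
  have pmin_le: "pmin * (x \<bullet> x) \<le> x \<bullet> (Pmin *v x)" for x using eig_bounds(2)[OF Pmin] by (simp add: pmin_def)
  have pmax_ge: "x \<bullet> (Pmax *v x) \<le> pmax * (x \<bullet> x)" for x using eig_bounds(3)[OF Pmax] by (simp add: pmax_def)
  have pmax_pos: "pmax > 0"
  proof -
    define z where "z = (axis undefined (1::real) :: real^'n)"
    have "z $ undefined = 1" by (simp add: z_def axis_def)
    then have z0: "z \<noteq> 0" by auto
    then have "z \<bullet> (Pmax *v z) > 0" using Pmax unfolding pos_def_def by blast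
    then have "pmax * (z \<bullet> z) > 0" using pmax_ge[of z] by linarith
    moreover have "z \<bullet> z > 0" using z0 by simp
    ultimately show ?thesis by (simp add: zero_less_mult_iff)
  qed
  define W where "W i x = norm (mat_sqrt (P i) *v x)" for i x
  have W0: "W i x \<ge> 0" for i x by (simp add: W_def)
  have W2: "(W i x)^2 = x \<bullet> (P i *v x)" for i x unfolding W_def by (rule sqrt_norm[OF Ppd])
  have Wup: "W i x \<le> sqrt pmax * norm x" for i x
  proof (rule sqrt_bound_le[OF W0 _ norm_ge_zero])
    have "x \<bullet> (P i *v x) \<le> x \<bullet> (Pmax *v x)" using Pbounds[of i] loewner_quad by blast
    also have "\<dots> \<le> pmax * (x \<bullet> x)" by (rule pmax_ge)
    finally show "(W i x)^2 \<le> pmax * (norm x)^2" by (simp add: W2 power2_norm_eq_inner)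
  qed
  have Wlo: "sqrt pmin * norm x \<le> W i x" for i x
  proof (rule sqrt_bound_ge[OF W0 _ norm_ge_zero])
    have "pmin * (x \<bullet> x) \<le> x \<bullet> (Pmin *v x)" by (rule pmin_le)
    also have "\<dots> \<le> x \<bullet> (P i *v x)" using Pbounds[of i] loewner_quad by blast
    finally show "pmin * (norm x)^2 \<le> (W i x)^2" by (simp add: W2 power2_norm_eq_inner)
    show "pmin \<ge> 0" using pmin_pos by simp
  qed
  have Wcross: "W (Suc i) x \<le> sqrt \<mu> * W i x" for i x
  proof (rule sqrt_bound_le[OF W0 _ W0])
    have "x \<bullet> (P (Suc i) *v x) \<le> x \<bullet> ((\<mu> *\<^sub>R P i) *v x)" using Pinc[of i] loewner_quad by blast
    also have "\<dots> = \<mu> * (x \<bullet> (P i *v x))" by (simp add: scaleR_matrix_vector_assoc[symmetric])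
    finally show "(W (Suc i) x)^2 \<le> \<mu> * (W i x)^2" by (simp add: W2)
  qed
  have Wtri: "W i (x + y) \<le> W i x + W i y" for i x y
    unfolding W_def by (simp add: matrix_vector_right_distrib norm_triangle_ineq)
  have kdiv: "k div T * T \<le> k \<and> k < k div T * T + T" for k
  proof -
    have "k mod T < T" using T_pos by simp
    then show ?thesis using div_mult_mod_eq[of k T] by linarith
  qed
  have epsb: "norm (eps k) \<le> epsbar" for k
  proof -
    define i where "i = k div T"
    have kin: "k \<in> {i*T ..< i*T + T}" using kdiv[of k] unfolding i_def by simp
    show ?thesis
    proof (cases "k \<in> {(Suc i)*T - L_D ..< (Suc i)*T}")
      case True then show ?thesis by (rule eps_bound)
    next
      case False
      then have "eps k = 0" using kin by (intro eps_zero[of k i]) simp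
      then show ?thesis using epsbar by simp
    qed
  qed
  have Beps: "norm (B k *v eps k) \<le> Bbar * epsbar" for k
  proof -
    have "norm (B k *v eps k) \<le> spec_norm (B k) * norm (eps k)"
      unfolding spec_norm_def by (rule onorm) (rule matrix_vector_mul_bounded_linear)
    also have "\<dots> \<le> Bbar * epsbar"
      by (rule mult_mono[OF Bnorm epsb Bbar norm_ge_zero])
    finally show ?thesis .
  qed
  define E where "E = sqrt pmax * (Bbar * epsbar)"
  have E0: "E \<ge> 0" using pmax_pos Bbar epsbar by (simp add: E_def)
  have step: "W (k div T) (eta (Suc k)) \<le> sqrt \<alpha> * W (k div T) (eta k) + E" for k
  proof -
    let ?i = "k div T"
    have kin: "k \<in> {?i*T ..< ?i*T + T}" using kdiv[of k] by simp
    have "W ?i (eta (Suc k)) \<le> W ?i (g k) + W ?i (B k *v eps k)" unfolding dyn by (rule Wtri)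
    also have "W ?i (g k) \<le> sqrt \<alpha> * W ?i (eta k)" using decay[OF kin] by (simp add: W_def)
    also have "W ?i (B k *v eps k) \<le> E"
    proof -
      have "W ?i (B k *v eps k) \<le> sqrt pmax * norm (B k *v eps k)" by (rule Wup)
      also have "\<dots> \<le> E" unfolding E_def using pmax_pos Beps[of k] by (simp add: mult_left_mono)
      finally show ?thesis .
    qed
    finally show ?thesis by simp
  qed
  have ah: "0 < \<alpha>hat" "\<alpha>hat < 1" "(\<alpha>hat / \<alpha>) ^ T = \<mu>" "\<alpha>hat / \<alpha> \<ge> 1"
    using alphahat_facts[OF T_pos alpha mu dwell alphahat] by auto
  define \<rho> where "\<rho> = sqrt (\<alpha>hat / \<alpha>)"
  define s where "s = sqrt \<alpha>hat"
  have rho1: "\<rho> \<ge> 1" using ah(4) by (simp add: \<rho>_def)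
  have s_eq: "s = sqrt \<alpha> * \<rho>" unfolding s_def \<rho>_def using alpha
    by (simp add: real_sqrt_mult[symmetric])
  have s0: "s \<ge> 0" and s1: "s < 1" using ah by (auto simp: s_def)
  have rhoT: "\<rho> ^ T = sqrt \<mu>" unfolding \<rho>_def by (simp add: real_sqrt_power[symmetric] ah(3))
  define U where "U k = \<rho> ^ (k mod T) * W (k div T) (eta k)" for k
  have Ustep: "U (Suc k) \<le> s * U k + \<rho> ^ T * E" for k
  proof (cases "Suc (k mod T) = T")
    case True
    then have d: "Suc k div T = Suc (k div T)" and m: "Suc k mod T = 0"
      by (simp_all add: div_Suc mod_Suc)
    have "U (Suc k) = W (Suc (k div T)) (eta (Suc k))" by (simp add: U_def d m)
    also have "\<dots> \<le> \<rho> ^ T * W (k div T) (eta (Suc k))" using Wcross by (simp add: rhoT)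
    also have "\<dots> \<le> \<rho> ^ T * (sqrt \<alpha> * W (k div T) (eta k) + E)"
      using step[of k] rho1 by (simp add: mult_left_mono)
    finally have "U (Suc k) \<le> \<rho> ^ T * (sqrt \<alpha> * W (k div T) (eta k)) + \<rho> ^ T * E"
      by (simp add: algebra_simps)
    moreover have rT: "\<rho> ^ T = \<rho> * \<rho> ^ (k mod T)" using True by (metis power_Suc)
    moreover have "\<rho> * \<rho> ^ (k mod T) * (sqrt \<alpha> * W (k div T) (eta k)) = s * U k"
      unfolding U_def s_eq by (simp add: algebra_simps)
    ultimately show ?thesis by simp
  next
    case False
    then have d: "Suc k div T = k div T" and m: "Suc k mod T = Suc (k mod T)"
      by (simp_all add: div_Suc mod_Suc)
    have le: "Suc (k mod T) \<le> T" using T_pos by (simp add: Suc_leI)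
    have "U (Suc k) = \<rho> ^ Suc (k mod T) * W (k div T) (eta (Suc k))" by (simp add: U_def d m)
    also have "\<dots> \<le> \<rho> ^ Suc (k mod T) * (sqrt \<alpha> * W (k div T) (eta k) + E)"
      using step[of k] rho1 by (simp add: mult_left_mono)
    also have "\<dots> = s * U k + \<rho> ^ Suc (k mod T) * E" by (simp add: U_def s_eq algebra_simps)
    also have "\<dots> \<le> s * U k + \<rho> ^ T * E"
      using power_increasing[OF le rho1] E0 by (simp add: mult_right_mono)
    finally show ?thesis .
  qed
  define X where "X = \<rho> ^ T * E / (1 - s)"
  have Xeq: "s * X + \<rho> ^ T * E = X" using s1 by (simp add: X_def field_simps)
  have X0: "X \<ge> 0" using s1 rho1 E0 by (simp add: X_def)
  have Ubound: "U k \<le> s ^ k * U 0 + X" for k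
  proof (induction k)
    case 0 then show ?case using X0 by simp
  next
    case (Suc k)
    have "U (Suc k) \<le> s * U k + \<rho> ^ T * E" by (rule Ustep)
    also have "\<dots> \<le> s * (s ^ k * U 0 + X) + \<rho> ^ T * E" using Suc s0 by (simp add: mult_left_mono)
    also have "\<dots> = s ^ Suc k * U 0 + X" using Xeq by (simp add: algebra_simps)
    finally show ?case .
  qed
  have U0: "U 0 \<le> sqrt pmax * norm (eta 0)" using Wup by (simp add: U_def)
  have WU: "W (k0 div T) (eta k0) \<le> U k0"
  proof -
    have "1 \<le> \<rho> ^ (k0 mod T)" by (rule one_le_power[OF rho1])
    from mult_right_mono[OF this W0] show ?thesis unfolding U_def by simp
  qed
  have "sqrt pmin * norm (eta k0) \<le> s ^ k0 * (sqrt pmax * norm (eta 0)) + X"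
  proof -
    have "sqrt pmin * norm (eta k0) \<le> U k0" using Wlo WU order_trans by blast
    also have "\<dots> \<le> s ^ k0 * U 0 + X" by (rule Ubound)
    also have "\<dots> \<le> s ^ k0 * (sqrt pmax * norm (eta 0)) + X"
      using U0 s0 by (simp add: mult_left_mono)
    finally show ?thesis .
  qed
  then have main: "norm (eta k0) \<le> (s ^ k0 * (sqrt pmax * norm (eta 0)) + X) / sqrt pmin"
    using pmin_pos by (simp add: le_divide_eq mult.commute)
  have e1: "\<alpha>hat powr (real k0 / 2) = s ^ k0"
    using ah(1) by (simp add: s_def powr_half_sqrt_powr powr_realpow real_sqrt_power)
  have e2: "(\<alpha>hat / \<alpha>) powr (real T / 2) = \<rho> ^ T"
    using ah(1) alpha by (simp add: \<rho>_def powr_half_sqrt_powr powr_realpow real_sqrt_power)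
  have e3: "sqrt (pmax / pmin) = sqrt pmax / sqrt pmin" by (rule real_sqrt_divide)
  have c0: "sqrt pmin > 0" using pmin_pos by simp
  have "(s ^ k0 * (sqrt pmax * norm (eta 0)) + X) / sqrt pmin
      = sqrt pmax / sqrt pmin * s ^ k0 * norm (eta 0) + sqrt pmax / sqrt pmin * (\<rho> ^ T / (1 - s)) * Bbar * epsbar"
    unfolding X_def E_def by (simp add: add_divide_distrib mult_ac)
  with main have fin: "norm (eta k0) \<le> sqrt pmax / sqrt pmin * s ^ k0 * norm (eta 0)
      + sqrt pmax / sqrt pmin * (\<rho> ^ T / (1 - s)) * Bbar * epsbar" by simp
  show "norm (eta k0) \<le>
      sqrt (lambda_max Pmax / lambda_min Pmin) * \<alpha>hat powr (real k0 / 2) * norm (eta 0)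
      + sqrt (lambda_max Pmax / lambda_min Pmin) * ((\<alpha>hat / \<alpha>) powr (real T / 2) / (1 - sqrt \<alpha>hat))
        * Bbar * epsbar"
    unfolding pmin_def[symmetric] pmax_def[symmetric] e1 e2 e3 s_def[symmetric] by (rule fin)
qed

end
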